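(* Let $\mathcal{T}$ be a finite tree, $w:V(\mathcal{T})\to\mathbb{R}_{\ge0}$, and $m=w(\mathcal{T})$. Then (i) for every $\alpha\in(0,1)$: $\displaystyle \mathtt{cent}^\alpha(\mathcal{T},w)\le\frac{1}{1-\alpha}\mathtt{OPT}(\mathcal{T},w)-\frac{\alpha}{1-\alpha}m$; (ii) for every $\alpha\in[\tfrac13,\tfrac12]$: $\displaystyle \mathtt{cent}^\alpha(\mathcal{T},w)\le\frac{1}{2-3\alpha}\mathtt{OPT}(\mathcal{T},w)-\frac{3\alpha-1}{2-3\alpha}m$.
   Context: For a subgraph $\mathcal{H}$ of $\mathcal{T}$, $w(\mathcal{H})=\sum_{x\in V(\mathcal{H})}w(x)$. A search tree on a tree $\mathcal{T}$ is a rooted tree $T$ with vertex set $V(\mathcal{T})$ defined recursively: its root is an arbitrary vertex $r$, and the children of $r$ are the roots of search trees built on the connected components of $\mathcal{T}-r$; a single-vertex tree has only itself as search tree. $\mathtt{cost}_w(T)=\sum_x w(x)\,\mathtt{depth}_T(x)$ with root depth $1$; $\mathtt{OPT}(\mathcal{T},w)$ is the minimum cost over all search trees on $\mathcal{T}$. For $0\le\alpha\le1$, a vertex $v$ is an $\alpha$-centroid of $(\mathcal{T},w)$ if every component $\mathcal{H}$ of $\mathcal{T}-v$ has $w(\mathcal{H})\le\alpha\, w(\mathcal{T})$. A search tree $T$ is an $\alpha$-centroid tree if every vertex $x$ is an $\alpha$-centroid of $(\mathcal{T}[V(T_x)],w)$, where $T_x$ is the subtree of $T$ rooted at $x$. $\mathtt{cent}^\alpha(\mathcal{T},w)$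 is the maximum cost of an $\alpha$-centroid tree of $(\mathcal{T},w)$, or $0$ if none exists. *)

theory Defs
  imports Main "HOL.Real"
begin

definition restr_rel :: "('a \<times> 'a) set \<Rightarrow> 'a set \<Rightarrow> 'a \<Rightarrow> 'a \<Rightarrow> bool" where
  "restr_rel E S x y \<longleftrightarrow> (x, y) \<in> E \<and> x \<in> S \<and> y \<in> S"

definition uedges :: "('a \<times> 'a) set \<Rightarrow> 'a set set" where
  "uedges E = {{x, y} | x y. (x, y) \<in> E}"

definition is_tree :: "'a set \<Rightarrow> ('a \<times> 'a) set \<Rightarrow> bool" where
  "is_tree V E \<longleftrightarrow> finite V \<and> V \<noteq> {} \<and> E \<subseteq> V \<times> V \<and> sym E \<and> (\<forall>x. (x, x) \<notin> E)
     \<and> (\<forall>x\<in>V. \<forall>y\<in>V. (restr_rel E V)\<^sup>*\<^sup>* x y)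
     \<and> card (uedges E) = card V - 1"

definition component :: "('a \<times> 'a) set \<Rightarrow> 'a set \<Rightarrow> 'a \<Rightarrow> 'a set" where
  "component E S x = {y. x \<in> S \<and> (restr_rel E S)\<^sup>*\<^sup>* x y}"

definition components :: "('a \<times> 'a) set \<Rightarrow> 'a set \<Rightarrow> 'a set set" where
  "components E S = component E S ` S"

datatype 'a stree = Node 'a "'a stree list"

fun root :: "'a stree \<Rightarrow> 'a" where
  "root (Node r ts) = r"

fun vset :: "'a stree \<Rightarrow> 'a set" where
  "vset (Node r ts) = insert r (\<Union>t\<in>set ts. vset t)"

fun subtrees :: "'a stree \<Rightarrow> 'a stree set" where
  "subtrees (Node r ts) = insert (Node r ts) (\<Union>t\<in>set ts. subtrees t)"

inductive search_tree :: "('a \<times> 'a) set \<Rightarrow> 'a set \<Rightarrow> 'a stree \<Rightarrow> bool" for E where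
  "\<lbrakk> r \<in> S; distinct (map vset ts); set (map vset ts) = components E (S - {r});
     \<forall>t\<in>set ts. search_tree E (vset t) t \<rbrakk> \<Longrightarrow> search_tree E S (Node r ts)"

text \<open>cost_w(T) = sum of w(x) * depth(x), root depth 1.\<close>
fun cost_aux :: "('a \<Rightarrow> real) \<Rightarrow> nat \<Rightarrow> 'a stree \<Rightarrow> real" where
  "cost_aux w d (Node r ts) = real d * w r + sum_list (map (cost_aux w (Suc d)) ts)"

definition cost :: "('a \<Rightarrow> real) \<Rightarrow> 'a stree \<Rightarrow> real" where
  "cost w T = cost_aux w 1 T"

definition OPT :: "'a set \<Rightarrow> ('a \<times> 'a) set \<Rightarrow> ('a \<Rightarrow> real) \<Rightarrow> real" where
  "OPT V E w = Min {cost w T | T. search_tree E V T}"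

definition is_centroid :: "('a \<times> 'a) set \<Rightarrow> ('a \<Rightarrow> real) \<Rightarrow> real \<Rightarrow> 'a set \<Rightarrow> 'a \<Rightarrow> bool" where
  "is_centroid E w \<alpha> S v \<longleftrightarrow> v \<in> S \<and>
     (\<forall>H\<in>components E (S - {v}). sum w H \<le> \<alpha> * sum w S)"

definition centroid_tree :: "'a set \<Rightarrow> ('a \<times> 'a) set \<Rightarrow> ('a \<Rightarrow> real) \<Rightarrow> real \<Rightarrow> 'a stree \<Rightarrow> bool" where
  "centroid_tree V E w \<alpha> T \<longleftrightarrow> search_tree E V T \<and>
     (\<forall>s\<in>subtrees T. is_centroid E w \<alpha> (vset s) (root s))"

definition cent :: "real \<Rightarrow> 'a set \<Rightarrow> ('a \<times> 'a) set \<Rightarrow> ('a \<Rightarrow> real) \<Rightarrow> real" where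
  "cent \<alpha> V E w = (if \<exists>T. centroid_tree V E w \<alpha> T
      then Max {cost w T | T. centroid_tree V E w \<alpha> T} else 0)"

end

theory Submission
  imports Defs
begin


definition conn :: "('a \<times> 'a) set \<Rightarrow> 'a set \<Rightarrow> bool" where
  "conn E S \<longleftrightarrow> (\<forall>x\<in>S. component E S x = S)"

lemma rr_sym: "sym E \<Longrightarrow> restr_rel E S x y \<Longrightarrow> restr_rel E S y x"
  unfolding restr_rel_def by (meson symD)

lemma rtr_sym: assumes "sym E" "(restr_rel E S)\<^sup>*\<^sup>* x y" shows "(restr_rel E S)\<^sup>*\<^sup>* y x"
  using assms(2)
proof (induction rule: rtranclp_induct)
  case base then show ?case by simp
next
  case (step y z)
  then show ?case using rr_sym[OF assms(1) step(2)]
    by (meson converse_rtranclp_into_rtranclp)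
qed

lemma rtr_in: "(restr_rel E S)\<^sup>*\<^sup>* x y \<Longrightarrow> x \<in> S \<Longrightarrow> y \<in> S"
  by (induction rule: rtranclp_induct) (auto simp: restr_rel_def)

lemma rtr_mono: "(restr_rel E K)\<^sup>*\<^sup>* x y \<Longrightarrow> K \<subseteq> H \<Longrightarrow> (restr_rel E H)\<^sup>*\<^sup>* x y"
proof (induction rule: rtranclp_induct)
  case base then show ?case by simp
next
  case (step y z)
  then have "restr_rel E H y z" by (auto simp: restr_rel_def)
  then show ?case using step by (meson rtranclp.rtrancl_into_rtrancl)
qed

lemma comp_self: "x \<in> S \<Longrightarrow> x \<in> component E S x"
  by (simp add: component_def)

lemma comp_sub: "component E S x \<subseteq> S"
proof
  fix y assume "y \<in> component E S x"
  then have "x \<in> S" "(restr_rel E S)\<^sup>*\<^sup>* x y" unfolding component_def by auto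
  then show "y \<in> S" using rtr_in by metis
qed

lemma comp_mono: "K \<subseteq> H \<Longrightarrow> component E K x \<subseteq> component E H x"
proof
  fix y assume "K \<subseteq> H" "y \<in> component E K x"
  then have "x \<in> H" "(restr_rel E H)\<^sup>*\<^sup>* x y" unfolding component_def using rtr_mono by auto
  then show "y \<in> component E H x" unfolding component_def by auto
qed

lemma comp_eq: assumes "sym E" "y \<in> component E S x" shows "component E S y = component E S x"
proof -
  have x: "x \<in> S" and p: "(restr_rel E S)\<^sup>*\<^sup>* x y" using assms(2) by (auto simp: component_def)
  have y: "y \<in> S" using rtr_in[OF p x] .
  have q: "(restr_rel E S)\<^sup>*\<^sup>* y x" using rtr_sym[OF assms(1) p] .
  show ?thesis
  proof
    show "component E S y \<subseteq> component E S x"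
    proof
      fix z assume "z \<in> component E S y"
      then have "(restr_rel E S)\<^sup>*\<^sup>* y z" unfolding component_def by blast
      then have "(restr_rel E S)\<^sup>*\<^sup>* x z" using p by (rule rtranclp_trans[rotated])
      then show "z \<in> component E S x" using x unfolding component_def by blast
    qed
    show "component E S x \<subseteq> component E S y"
    proof
      fix z assume "z \<in> component E S x"
      then have "(restr_rel E S)\<^sup>*\<^sup>* x z" unfolding component_def by blast
      then have "(restr_rel E S)\<^sup>*\<^sup>* y z" using q by (rule rtranclp_trans[rotated])
      then show "z \<in> component E S y" using y unfolding component_def by blast
    qed
  qed
qed

lemma comp_restrict:
  assumes "x \<in> K" "K \<subseteq> H" "component E H x \<subseteq> K"
  shows "component E K x = component E H x"
proof
  show "component E K x \<subseteq> component E H x" using comp_mono[OF assms(2)] .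
  show "component E H x \<subseteq> component E K x"
  proof
    fix y assume "y \<in> component E H x"
    then have p: "(restr_rel E H)\<^sup>*\<^sup>* x y" by (simp add: component_def)
    have "(restr_rel E K)\<^sup>*\<^sup>* x y" using p
    proof (induction rule: rtranclp_induct)
      case base then show ?case by simp
    next
      case (step y z)
      have "y \<in> component E H x" "z \<in> component E H x"
        using step assms(1,2) unfolding component_def
        by (auto intro: rtranclp.rtrancl_into_rtrancl)
      then have "y \<in> K" "z \<in> K" using assms(3) by auto
      then have "restr_rel E K y z" using step(2) by (simp add: restr_rel_def)
      then show ?case using step(3) by (simp add: rtranclp.rtrancl_into_rtrancl)
    qed
    then show "y \<in> component E K x" using assms(1) by (simp add: component_def)
  qed
qed

lemma comps_union: "\<Union>(components E S) = S"
proof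
  show "\<Union>(components E S) \<subseteq> S"
  proof
    fix y assume "y \<in> \<Union>(components E S)"
    then obtain a where "y \<in> component E S a" unfolding components_def by auto
    then show "y \<in> S" using comp_sub[of E S a] by auto
  qed
  show "S \<subseteq> \<Union>(components E S)"
  proof
    fix y assume "y \<in> S"
    then have "y \<in> component E S y" "component E S y \<in> components E S"
      using comp_self unfolding components_def by auto
    then show "y \<in> \<Union>(components E S)" by blast
  qed
qed

lemma comps_sub: "C \<in> components E S \<Longrightarrow> C \<subseteq> S"
proof -
  assume "C \<in> components E S"
  then obtain a where "C = component E S a" unfolding components_def by blast
  then show ?thesis using comp_sub[of E S a] by simp
qed

lemma comps_ne: "C \<in> components E S \<Longrightarrow> C \<noteq> {}"
proof -
  assume "C \<in> components E S"
  then obtain a where "a \<in> S" "C = component E S a" unfolding components_def by blast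
  then show ?thesis using comp_self[of a S E] by auto
qed

lemma comps_finite: "finite S \<Longrightarrow> finite (components E S)"
  by (simp add: components_def)

lemma comps_mem: assumes "sym E" "C \<in> components E S" "x \<in> C" shows "C = component E S x"
proof -
  obtain a where a: "C = component E S a" using assms(2) by (auto simp: components_def)
  then show ?thesis using comp_eq[OF assms(1), of x S a] assms(3) by simp
qed

lemma comps_disj: assumes "sym E" "C \<in> components E S" "D \<in> components E S" "C \<noteq> D"
  shows "C \<inter> D = {}"
proof (rule ccontr)
  assume "C \<inter> D \<noteq> {}"
  then obtain y where "y \<in> C" "y \<in> D" by auto
  then have "C = component E S y" "D = component E S y"
    using comps_mem[OF assms(1,2)] comps_mem[OF assms(1,3)] by auto
  then show False using assms(4) by simp
qed

lemma comp_in_comps: "x \<in> S \<Longrightarrow> component E S x \<in> components E S"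
  by (simp add: components_def)

lemma conn_comp: assumes "sym E" "C \<in> components E S" shows "conn E C"
  unfolding conn_def
proof
  fix y assume y: "y \<in> C"
  have C: "C = component E S y" using comps_mem[OF assms y] .
  have "component E C y = component E S y"
    by (rule comp_restrict[OF y comps_sub[OF assms(2)]]) (simp add: C[symmetric])
  also have "\<dots> = C" using C by (rule sym)
  finally show "component E C y = C" .
qed

lemma conn_comps: assumes "conn E S" "S \<noteq> {}" shows "components E S = {S}"
proof -
  have a: "\<forall>x\<in>S. component E S x = S" using assms(1) unfolding conn_def .
  have "component E S ` S = {S}"
  proof
    show "component E S ` S \<subseteq> {S}" using a by blast
    show "{S} \<subseteq> component E S ` S" using a assms(2) by blast
  qed
  then show ?thesis unfolding components_def .
qed

lemma rtr_conn: "conn E S \<Longrightarrow> x \<in> S \<Longrightarrow> y \<in> S \<Longrightarrow> (restr_rel E S)\<^sup>*\<^sup>* x y"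
proof -
  assume a: "conn E S" "x \<in> S" "y \<in> S"
  then have "y \<in> component E S x" unfolding conn_def by blast
  then show ?thesis unfolding component_def by blast
qed



lemma vset_finite: "finite (vset t)"
  by (induction t) auto

lemma st_inv: assumes "search_tree E S (Node r ts)"
  shows "r \<in> S" "distinct (map vset ts)" "set (map vset ts) = components E (S - {r})"
    "\<And>t. t \<in> set ts \<Longrightarrow> search_tree E (vset t) t"
  using assms by (cases rule: search_tree.cases; simp)+

lemma st_vset: "search_tree E S T \<Longrightarrow> vset T = S"
proof (induction rule: search_tree.induct)
  case (1 r S ts)
  have "(\<Union>t\<in>set ts. vset t) = \<Union>(set (map vset ts))" by simp
  also have "\<dots> = S - {r}" using 1(3) comps_union by metis
  finally show ?case using 1(1) by auto
qed

lemma st_distinct: "search_tree E S (Node r ts) \<Longrightarrow> distinct ts"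
proof -
  assume a: "search_tree E S (Node r ts)"
  show ?thesis using st_inv(2)[OF a] by (simp add: distinct_map)
qed

lemma st_child_comp: "search_tree E S (Node r ts) \<Longrightarrow> t \<in> set ts \<Longrightarrow> vset t \<in> components E (S - {r})"
proof -
  assume a: "search_tree E S (Node r ts)" "t \<in> set ts"
  have "vset t \<in> set (map vset ts)" using a(2) by simp
  then show ?thesis unfolding st_inv(3)[OF a(1)] .
qed

lemma st_child_sub: "search_tree E S (Node r ts) \<Longrightarrow> t \<in> set ts \<Longrightarrow> vset t \<subseteq> S - {r}"
proof -
  assume a: "search_tree E S (Node r ts)" "t \<in> set ts"
  show ?thesis using comps_sub[OF st_child_comp[OF a]] .
qed

lemma st_child_disj: assumes "sym E" "search_tree E S (Node r ts)" "t \<in> set ts" "u \<in> set ts" "t \<noteq> u"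
  shows "vset t \<inter> vset u = {}"
proof -
  have "inj_on vset (set ts)" using st_inv(2)[OF assms(2)] by (simp add: distinct_map)
  then have "vset t \<noteq> vset u" using assms(3-5) by (auto dest: inj_onD)
  then show ?thesis using comps_disj[OF assms(1) st_child_comp[OF assms(2,3)] st_child_comp[OF assms(2,4)]] by simp
qed

lemma sum_list_set: "distinct ts \<Longrightarrow> sum_list (map f ts) = sum f (set ts)"
  by (simp add: sum_list_distinct_conv_sum_set)

lemma st_sum_vset: assumes "sym E" "search_tree E S (Node r ts)"
  shows "sum w S = w r + (\<Sum>t\<in>set ts. sum w (vset t))"
proof -
  have V: "S = insert r (\<Union>t\<in>set ts. vset t)" using st_vset[OF assms(2)] by simp
  have rn: "r \<notin> (\<Union>t\<in>set ts. vset t)" using st_child_sub[OF assms(2)] by blast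
  have "sum w (\<Union>t\<in>set ts. vset t) = (\<Sum>t\<in>set ts. sum w (vset t))"
    by (rule sum.UNION_disjoint) (auto simp: vset_finite dest: st_child_disj[OF assms])
  then show ?thesis using V rn by (simp add: vset_finite)
qed

fun cw :: "('a \<Rightarrow> real) \<Rightarrow> 'a set \<Rightarrow> 'a stree \<Rightarrow> real" where
  "cw w H (Node r ts) = (if r \<in> H then sum w (H \<inter> vset (Node r ts)) else 0) + sum_list (map (cw w H) ts)"

declare cw.simps[simp del]

lemma sum_list_nonneg': "(\<And>t. t \<in> set ts \<Longrightarrow> 0 \<le> f t) \<Longrightarrow> (0::real) \<le> sum_list (map f ts)"
  by (induction ts) auto

lemma le_sum_list_mem: "t \<in> set ts \<Longrightarrow> (\<And>u. u \<in> set ts \<Longrightarrow> 0 \<le> f u) \<Longrightarrow> (f t::real) \<le> sum_list (map f ts)"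
proof (induction ts)
  case Nil then show ?case by simp
next
  case (Cons a ts)
  have z: "0 \<le> sum_list (map f ts)" by (rule sum_list_nonneg') (use Cons.prems in auto)
  have fa: "0 \<le> f a" using Cons.prems by auto
  show ?case
  proof (cases "t = a")
    case True then show ?thesis using z by simp
  next
    case False
    then have "f t \<le> sum_list (map f ts)" using Cons by auto
    then show ?thesis using fa by simp
  qed
qed

lemma cw_nn: "\<forall>x\<in>H. 0 \<le> w x \<Longrightarrow> 0 \<le> cw w H t"
proof (induction t)
  case (Node r ts)
  have A: "0 \<le> sum w (H \<inter> vset (Node r ts))" by (rule sum_nonneg) (use Node.prems in auto)
  have B: "0 \<le> sum_list (map (cw w H) ts)" by (rule sum_list_nonneg') (use Node in auto)
  show ?case
  proof (cases "r \<in> H")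
    case True
    then show ?thesis unfolding cw.simps if_P[OF True] using A B by linarith
  next
    case False
    then show ?thesis unfolding cw.simps if_not_P[OF False] using A B by linarith
  qed
qed

lemma cw_inter: "vset t \<subseteq> K \<Longrightarrow> cw w (H \<inter> K) t = cw w H t"
proof (induction t)
  case (Node r ts)
  have "map (cw w (H \<inter> K)) ts = map (cw w H) ts"
    by (rule map_cong) (use Node in auto)
  then have m: "sum_list (map (cw w (H \<inter> K)) ts) = sum_list (map (cw w H) ts)" by (rule arg_cong)
  have a: "H \<inter> K \<inter> vset (Node r ts) = H \<inter> vset (Node r ts)" using Node.prems by auto
  have b: "(r \<in> H \<inter> K) = (r \<in> H)" using Node.prems by auto
  show ?case unfolding cw.simps m a b ..
qed

lemma cw_vset: "cw w H t = cw w (H \<inter> vset t) t"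
  using cw_inter[of t "vset t" w H] by simp

lemma cw_single: "r \<in> vset t \<Longrightarrow> 0 \<le> w r \<Longrightarrow> w r \<le> cw w {r} t"
proof (induction t)
  case (Node x ts)
  have nn: "0 \<le> sum_list (map (cw w {r}) ts)"
    by (rule sum_list_nonneg') (rule cw_nn, use Node.prems in auto)
  show ?case
  proof (cases "x = r")
    case True
    then have "cw w {r} (Node x ts) = w r + sum_list (map (cw w {r}) ts)"
      by (simp add: cw.simps)
    then show ?thesis using nn by simp
  next
    case False
    then obtain t where t: "t \<in> set ts" "r \<in> vset t" using Node.prems by auto
    have "w r \<le> cw w {r} t" using Node.IH[OF t] Node.prems by simp
    also have "\<dots> \<le> sum_list (map (cw w {r}) ts)"
      by (rule le_sum_list_mem[OF t(1)]) (rule cw_nn, use Node.prems in simp)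
    also have "\<dots> = cw w {r} (Node x ts)" using False by (simp add: cw.simps)
    finally show ?thesis .
  qed
qed



lemma cost_aux_cw: assumes "sym E" shows "search_tree E S T \<Longrightarrow>
  cost_aux w d T = real d * sum w (vset T) - sum w (vset T) + cw w UNIV T"
proof (induction arbitrary: d rule: search_tree.induct)
  case (1 r S ts)
  have st: "search_tree E S (Node r ts)" using 1 by (intro search_tree.intros) auto
  have dts: "distinct ts" using st_distinct[OF st] .
  have W: "sum w S = w r + (\<Sum>t\<in>set ts. sum w (vset t))" using st_sum_vset[OF assms st] .
  have V: "vset (Node r ts) = S" using st_vset[OF st] .
  have "cost_aux w d (Node r ts) = real d * w r + sum_list (map (cost_aux w (Suc d)) ts)" by simp
  also have "sum_list (map (cost_aux w (Suc d)) ts) = (\<Sum>t\<in>set ts. cost_aux w (Suc d) t)"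
    using sum_list_set[OF dts] .
  also have "\<dots> = (\<Sum>t\<in>set ts. real d * sum w (vset t) + cw w UNIV t)"
  proof (rule sum.cong)
    fix t assume "t \<in> set ts"
    then have "cost_aux w (Suc d) t = real (Suc d) * sum w (vset t) - sum w (vset t) + cw w UNIV t"
      using 1(4) by blast
    then show "cost_aux w (Suc d) t = real d * sum w (vset t) + cw w UNIV t"
      by (simp add: algebra_simps)
  qed simp
  also have "\<dots> = real d * (\<Sum>t\<in>set ts. sum w (vset t)) + (\<Sum>t\<in>set ts. cw w UNIV t)"
    by (simp add: sum.distrib sum_distrib_left)
  finally have L: "cost_aux w d (Node r ts) = real d * sum w S + (\<Sum>t\<in>set ts. cw w UNIV t)"
    using W by (simp add: algebra_simps)
  have "cw w UNIV (Node r ts) = sum w (vset (Node r ts)) + sum_list (map (cw w UNIV) ts)"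
    by (simp only: cw.simps) simp
  also have "\<dots> = sum w S + (\<Sum>t\<in>set ts. cw w UNIV t)" using V sum_list_set[OF dts] by simp
  finally show ?case using L V by simp
qed

lemma cost_cw: "sym E \<Longrightarrow> search_tree E S T \<Longrightarrow> cost w T = cw w UNIV T"
  using cost_aux_cw[of E S T w 1] by (simp add: cost_def)

lemma cw_node_univ: "cw w UNIV (Node r ts) = sum w (vset (Node r ts)) + sum_list (map (cw w UNIV) ts)"
  by (simp only: cw.simps) simp

lemma sum_swap_list: "(\<Sum>F\<in>A. sum_list (map (f F) ts)) = sum_list (map (\<lambda>u. \<Sum>F\<in>A. f F u) ts)"
  by (induction ts) (auto simp: sum.distrib)

lemma sum_unique: assumes "finite A" "F0 \<in> A" "\<And>F. F \<in> A \<Longrightarrow> P F \<longleftrightarrow> F = F0"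
  shows "(\<Sum>F\<in>A. if P F then g F else 0) = (g F0::real)"
proof -
  have "(\<Sum>F\<in>A. if P F then g F else 0) = (\<Sum>F\<in>A. if F = F0 then g F else 0)"
    by (rule sum.cong) (use assms(3) in auto)
  also have "\<dots> = g F0" using assms(1,2) by (simp add: sum.delta')
  finally show ?thesis .
qed

lemma sum_none: assumes "\<And>F. F \<in> A \<Longrightarrow> \<not> P F"
  shows "(\<Sum>F\<in>A. if P F then g F else 0) = (0::real)"
  by (rule sum.neutral) (use assms in auto)

lemma sum_list_mono': "(\<And>t. t \<in> set ts \<Longrightarrow> f t \<le> g t) \<Longrightarrow> sum_list (map f ts) \<le> (sum_list (map g ts)::real)"
  by (induction ts) (auto intro: add_mono)

lemma SA: assumes "finite \<F>" "\<And>F G. F \<in> \<F> \<Longrightarrow> G \<in> \<F> \<Longrightarrow> F \<noteq> G \<Longrightarrow> F \<inter> G = {}"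
  "\<Union>\<F> \<subseteq> A" "\<forall>x\<in>A. 0 \<le> w x"
  shows "(\<Sum>F\<in>\<F>. cw w F t) \<le> cw w A t"
proof (induction t)
  case (Node r ts)
  let ?V = "vset (Node r ts)"
  have "(\<Sum>F\<in>\<F>. cw w F (Node r ts)) = (\<Sum>F\<in>\<F>. if r \<in> F then sum w (F \<inter> ?V) else 0)
     + (\<Sum>F\<in>\<F>. sum_list (map (cw w F) ts))"
    by (simp only: cw.simps sum.distrib)
  also have "(\<Sum>F\<in>\<F>. sum_list (map (cw w F) ts)) = sum_list (map (\<lambda>u. \<Sum>F\<in>\<F>. cw w F u) ts)"
    by (rule sum_swap_list)
  also have "\<dots> \<le> sum_list (map (cw w A) ts)"
    by (rule sum_list_mono') (use Node in auto)
  also have "(\<Sum>F\<in>\<F>. if r \<in> F then sum w (F \<inter> ?V) else 0) \<le> (if r \<in> A then sum w (A \<inter> ?V) else 0)"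
  proof (cases "\<exists>F0\<in>\<F>. r \<in> F0")
    case True
    then obtain F0 where F0: "F0 \<in> \<F>" "r \<in> F0" by blast
    have "(\<Sum>F\<in>\<F>. if r \<in> F then sum w (F \<inter> ?V) else 0) = sum w (F0 \<inter> ?V)"
      by (rule sum_unique) (use assms(1,2) F0 in auto)
    also have "\<dots> \<le> sum w (A \<inter> ?V)"
      by (rule sum_mono2) (use assms(3,4) F0 vset_finite[of "Node r ts"] in auto)
    finally show ?thesis using F0 assms(3) by auto
  next
    case False
    have "(\<Sum>F\<in>\<F>. if r \<in> F then sum w (F \<inter> ?V) else 0) = 0"
      by (rule sum_none) (use False in auto)
    moreover have "0 \<le> sum w (A \<inter> ?V)" by (rule sum_nonneg) (use assms(4) in auto)
    ultimately show ?thesis by (cases "r \<in> A") (simp_all only: if_True if_False)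
  qed
  finally show ?case by (simp only: cw.simps)
qed



lemma st_build: assumes "finite S" "r \<in> S" "\<And>D. D \<in> components E (S - {r}) \<Longrightarrow> search_tree E D (f D)"
  shows "\<exists>ts. search_tree E S (Node r ts) \<and>
     (\<forall>g. sum_list (map g ts) = (\<Sum>D\<in>components E (S - {r}). (g (f D)::real)))"
proof -
  have "finite (components E (S - {r}))" using assms(1) by (simp add: comps_finite)
  then obtain xs where xs: "set xs = components E (S - {r})" "distinct xs"
    using finite_distinct_list by blast
  have vf: "\<And>D. D \<in> set xs \<Longrightarrow> vset (f D) = D" using st_vset assms(3) xs(1) by blast
  have mv: "map vset (map f xs) = xs"
    by (simp add: map_idI vf)
  have "search_tree E S (Node r (map f xs))"
  proof (rule search_tree.intros)
    show "r \<in> S" by fact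
    show "distinct (map vset (map f xs))" using mv xs(2) by simp
    show "set (map vset (map f xs)) = components E (S - {r})" using mv xs(1) by simp
    show "\<forall>t\<in>set (map f xs). search_tree E (vset t) t"
    proof
      fix t assume "t \<in> set (map f xs)"
      then obtain D where D: "D \<in> set xs" "t = f D" by auto
      then show "search_tree E (vset t) t" using vf[OF D(1)] assms(3) xs(1) by simp
    qed
  qed
  moreover have "\<forall>g. sum_list (map g (map f xs)) = (\<Sum>D\<in>components E (S - {r}). (g (f D)::real))"
  proof
    fix g :: "'a stree \<Rightarrow> real"
    have "sum_list (map g (map f xs)) = sum_list (map (g \<circ> f) xs)" by simp
    also have "\<dots> = sum (g \<circ> f) (set xs)" using xs(2) by (rule sum_list_set)
    finally show "sum_list (map g (map f xs)) = (\<Sum>D\<in>components E (S - {r}). g (f D))"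
      using xs(1) by simp
  qed
  ultimately show ?thesis by blast
qed

lemma comps_psub: "D \<in> components E (S - {r}) \<Longrightarrow> r \<in> S \<Longrightarrow> D \<subset> S"
  using comps_sub by blast

lemma st_exists: "finite S \<Longrightarrow> S \<noteq> {} \<Longrightarrow> \<exists>T. search_tree E S T"
proof (induction "card S" arbitrary: S rule: less_induct)
  case less
  obtain r where r: "r \<in> S" using less.prems by blast
  define f where "f D = (SOME T. search_tree E D T)" for D
  have "search_tree E D (f D)" if D: "D \<in> components E (S - {r})" for D
  proof -
    have ps: "D \<subset> S" using comps_psub[OF D r] .
    have "\<exists>T. search_tree E D T"
      by (rule less.hyps) (use ps less.prems comps_ne[OF D] in \<open>auto simp: psubset_card_mono finite_subset\<close>)
    then show ?thesis unfolding f_def by (rule someI_ex)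
  qed
  then show ?case using st_build[OF less.prems(1) r, of E f] by blast
qed

lemma st_finite: "finite S \<Longrightarrow> finite {T. search_tree E S T}"
proof (induction "card S" arbitrary: S rule: less_induct)
  case less
  define U where "U = (\<Union>D\<in>{D. D \<subset> S}. {T. search_tree E D T})"
  have fU: "finite U" unfolding U_def
  proof (rule finite_UN_I)
    have "{D. D \<subset> S} \<subseteq> Pow S" by auto
    then show "finite {D. D \<subset> S}" using less.prems by (simp add: finite_subset)
    fix D assume "D \<in> {D. D \<subset> S}"
    then have D: "D \<subset> S" by simp
    have "card D < card S" using psubset_card_mono[OF less.prems D] .
    moreover have "finite D" using D less.prems finite_subset by blast
    ultimately show "finite {T. search_tree E D T}" using less.hyps by blast
  qed
  have "{T. search_tree E S T} \<subseteq> (\<lambda>(r, ts). Node r ts) ` (S \<times> {ts. set ts \<subseteq> U \<and> length ts \<le> card S})"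
  proof
    fix T assume "T \<in> {T. search_tree E S T}"
    then have st: "search_tree E S T" by simp
    obtain r ts where T: "T = Node r ts" by (cases T)
    note st = st[unfolded T]
    have r: "r \<in> S" using st_inv(1)[OF st] .
    have "set ts \<subseteq> U"
    proof
      fix t assume t: "t \<in> set ts"
      have "vset t \<subset> S" using st_child_sub[OF st t] r by blast
      then show "t \<in> U" unfolding U_def using st_inv(4)[OF st t] by blast
    qed
    moreover have "length ts \<le> card S"
    proof -
      have "length ts = length (map vset ts)" by simp
      also have "\<dots> = card (set (map vset ts))" using distinct_card[OF st_inv(2)[OF st]] by (rule sym)
      also have "\<dots> = card (components E (S - {r}))" using st_inv(3)[OF st] by simp
      also have "\<dots> \<le> card (S - {r})" unfolding components_def by (rule card_image_le) (use less.prems in simp)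
      also have "\<dots> \<le> card S" using less.prems by (simp add: card_mono)
      finally show ?thesis .
    qed
    ultimately show "T \<in> (\<lambda>(r, ts). Node r ts) ` (S \<times> {ts. set ts \<subseteq> U \<and> length ts \<le> card S})"
      using r T by auto
  qed
  moreover have "finite ((\<lambda>(r, ts). Node r ts) ` (S \<times> {ts. set ts \<subseteq> U \<and> length ts \<le> card S}))"
    using less.prems fU by (simp add: finite_lists_length_le)
  ultimately show ?case using finite_subset by blast
qed

lemma opt_props: assumes "finite S" "S \<noteq> {}"
  shows "\<exists>T. search_tree E S T \<and> cost w T = OPT S E w"
    "\<And>T. search_tree E S T \<Longrightarrow> OPT S E w \<le> cost w T"
proof -
  have eq: "{cost w T | T. search_tree E S T} = cost w ` {T. search_tree E S T}" by auto
  have fin: "finite {cost w T | T. search_tree E S T}" unfolding eq using st_finite[OF assms(1)] by simp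
  have ne: "{cost w T | T. search_tree E S T} \<noteq> {}" using st_exists[OF assms] by auto
  show "\<exists>T. search_tree E S T \<and> cost w T = OPT S E w"
    using Min_in[OF fin ne] unfolding OPT_def by auto
  show "\<And>T. search_tree E S T \<Longrightarrow> OPT S E w \<le> cost w T"
    unfolding OPT_def using Min_le[OF fin] by auto
qed



lemma CONS: assumes "sym E" "finite C" "r \<in> C"
  shows "OPT C E w \<le> sum w C + (\<Sum>D\<in>components E (C - {r}). OPT D E w)"
proof -
  define f where "f D = (SOME T. search_tree E D T \<and> cost w T = OPT D E w)" for D
  have fD: "search_tree E D (f D) \<and> cost w (f D) = OPT D E w" if D: "D \<in> components E (C - {r})" for D
  proof -
    have "finite D" using comps_sub[OF D] assms(2) finite_subset by blast
    then have "\<exists>T. search_tree E D T \<and> cost w T = OPT D E w" using opt_props(1) comps_ne[OF D] by blast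
    then show ?thesis unfolding f_def by (rule someI_ex)
  qed
  obtain ts where ts: "search_tree E C (Node r ts)"
    "\<forall>g. sum_list (map g ts) = (\<Sum>D\<in>components E (C - {r}). (g (f D)::real))"
    using st_build[OF assms(2,3), of E f] fD by blast
  have "cost w (Node r ts) = cw w UNIV (Node r ts)" using cost_cw[OF assms(1) ts(1)] .
  also have "\<dots> = sum w C + sum_list (map (cw w UNIV) ts)"
    unfolding cw_node_univ st_vset[OF ts(1)] ..
  also have "sum_list (map (cw w UNIV) ts) = (\<Sum>D\<in>components E (C - {r}). cw w UNIV (f D))"
    using ts(2) by blast
  also have "\<dots> = (\<Sum>D\<in>components E (C - {r}). OPT D E w)"
  proof (rule sum.cong)
    fix D assume D: "D \<in> components E (C - {r})"
    show "cw w UNIV (f D) = OPT D E w" using fD[OF D] cost_cw[OF assms(1)] by metis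
  qed simp
  finally have "cost w (Node r ts) = sum w C + (\<Sum>D\<in>components E (C - {r}). OPT D E w)" .
  moreover have "OPT C E w \<le> cost w (Node r ts)" using opt_props(2)[OF assms(2) _ ts(1)] assms(3) by blast
  ultimately show ?thesis by simp
qed

lemma comp_in_child: assumes "sym E" "search_tree E S (Node r ts)" "H \<subseteq> S - {r}" "t \<in> set ts"
  "x \<in> H" "x \<in> vset t"
  shows "component E (H \<inter> vset t) x = component E H x"
proof (rule comp_restrict)
  show "x \<in> H \<inter> vset t" using assms(5,6) by simp
  show "H \<inter> vset t \<subseteq> H" by simp
  have vt: "vset t = component E (S - {r}) x"
    using comps_mem[OF assms(1) st_child_comp[OF assms(2,4)] assms(6)] .
  have "component E H x \<subseteq> component E (S - {r}) x" using comp_mono[OF assms(3)] .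
  then show "component E H x \<subseteq> H \<inter> vset t" using comp_sub[of E H x] vt by blast
qed

lemma child_of: assumes "search_tree E S (Node r ts)" "x \<in> S" "x \<noteq> r"
  shows "\<exists>t\<in>set ts. x \<in> vset t"
  using st_vset[OF assms(1)] assms(2,3) by auto

lemma SPLIT: assumes "sym E" "search_tree E S (Node r ts)" "H \<subseteq> S - {r}"
  and IH: "\<And>t K. t \<in> set ts \<Longrightarrow> K \<subseteq> vset t \<Longrightarrow> (\<Sum>C\<in>components E K. OPT C E w) \<le> cw w K t"
  shows "(\<Sum>C\<in>components E H. OPT C E w) \<le> sum_list (map (cw w H) ts)"
proof -
  note st = assms(2)
  have U: "components E H = (\<Union>t\<in>set ts. components E (H \<inter> vset t))"
  proof
    show "components E H \<subseteq> (\<Union>t\<in>set ts. components E (H \<inter> vset t))"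
    proof
      fix C assume "C \<in> components E H"
      then obtain x where x: "x \<in> H" "C = component E H x" unfolding components_def by blast
      obtain t where t: "t \<in> set ts" "x \<in> vset t" using child_of[OF st, of x] x(1) assms(3) by blast
      have "C = component E (H \<inter> vset t) x" using comp_in_child[OF assms(1-3) t(1) x(1) t(2)] x(2) by simp
      then have "C \<in> components E (H \<inter> vset t)" using x(1) t(2) comp_in_comps[of x "H \<inter> vset t" E] by simp
      then show "C \<in> (\<Union>t\<in>set ts. components E (H \<inter> vset t))" using t(1) by blast
    qed
    show "(\<Union>t\<in>set ts. components E (H \<inter> vset t)) \<subseteq> components E H"
    proof
      fix C assume "C \<in> (\<Union>t\<in>set ts. components E (H \<inter> vset t))"
      then obtain t where t: "t \<in> set ts" "C \<in> components E (H \<inter> vset t)" by blast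
      then obtain x where x: "x \<in> H \<inter> vset t" "C = component E (H \<inter> vset t) x" unfolding components_def by blast
      have "C = component E H x" using comp_in_child[OF assms(1-3) t(1)] x by simp
      then show "C \<in> components E H" using x(1) comp_in_comps[of x H E] by simp
    qed
  qed
  have "(\<Sum>C\<in>components E H. OPT C E w) = (\<Sum>t\<in>set ts. \<Sum>C\<in>components E (H \<inter> vset t). OPT C E w)"
    unfolding U
  proof (rule sum.UNION_disjoint)
    show "finite (set ts)" by simp
    show "\<forall>t\<in>set ts. finite (components E (H \<inter> vset t))"
      by (simp add: comps_finite vset_finite)
    show "\<forall>t\<in>set ts. \<forall>u\<in>set ts. t \<noteq> u \<longrightarrow> components E (H \<inter> vset t) \<inter> components E (H \<inter> vset u) = {}"
    proof (intro ballI impI)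
      fix t u assume tu: "t \<in> set ts" "u \<in> set ts" "t \<noteq> u"
      have d: "vset t \<inter> vset u = {}" using st_child_disj[OF assms(1) st tu] .
      show "components E (H \<inter> vset t) \<inter> components E (H \<inter> vset u) = {}"
      proof (rule ccontr)
        assume "components E (H \<inter> vset t) \<inter> components E (H \<inter> vset u) \<noteq> {}"
        then obtain C where C: "C \<in> components E (H \<inter> vset t)" "C \<in> components E (H \<inter> vset u)" by blast
        have "C \<subseteq> vset t" "C \<subseteq> vset u" using comps_sub[OF C(1)] comps_sub[OF C(2)] by auto
        then show False using comps_ne[OF C(1)] d by blast
      qed
    qed
  qed
  also have "\<dots> \<le> (\<Sum>t\<in>set ts. cw w H t)"
  proof (rule sum_mono)
    fix t assume t: "t \<in> set ts"
    have "(\<Sum>C\<in>components E (H \<inter> vset t). OPT C E w) \<le> cw w (H \<inter> vset t) t" by (rule IH[OF t]) simp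
    also have "\<dots> = cw w H t" using cw_vset[of w H t] by simp
    finally show "(\<Sum>C\<in>components E (H \<inter> vset t). OPT C E w) \<le> cw w H t" .
  qed
  also have "\<dots> = sum_list (map (cw w H) ts)" using sum_list_set[OF st_distinct[OF st], of "cw w H"] by simp
  finally show ?thesis .
qed



lemma comp_split_in: assumes "sym E" "x \<in> H - {r}" "x \<in> component E H r" and that: "C0 = component E H r"
  shows "component E (C0 - {r}) x = component E (H - {r}) x"
proof (rule comp_restrict)
  show "x \<in> C0 - {r}" using assms that by simp
  have "C0 \<subseteq> H" using that comp_sub by metis
  then show "C0 - {r} \<subseteq> H - {r}" by blast
  have cx: "component E H x = C0" using comp_eq[OF assms(1,3)] that by simp
  have "component E (H - {r}) x \<subseteq> component E H x" by (rule comp_mono) blast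
  then show "component E (H - {r}) x \<subseteq> C0 - {r}" using cx comp_sub[of E "H - {r}" x] by blast
qed

lemma comp_split_out: assumes "sym E" "x \<in> H - {r}" "x \<notin> component E H r" "r \<in> H"
  shows "component E (H - {r}) x = component E H x"
proof (rule comp_restrict)
  show "x \<in> H - {r}" by fact
  show "H - {r} \<subseteq> H" by blast
  have "r \<notin> component E H x"
  proof
    assume "r \<in> component E H x"
    then have "component E H r = component E H x" using comp_eq[OF assms(1)] by blast
    then show False using assms(3) comp_self[of x H E] assms(2) by simp
  qed
  then show "component E H x \<subseteq> H - {r}" using comp_sub[of E H x] by blast
qed

lemma comp_split: assumes "sym E" "r \<in> H" "C0 = component E H r"
  shows "components E (H - {r}) = components E (C0 - {r}) \<union> (components E H - {C0})"
proof
  have C0H: "C0 \<subseteq> H" using assms(3) comp_sub by metis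
  show "components E (H - {r}) \<subseteq> components E (C0 - {r}) \<union> (components E H - {C0})"
  proof
    fix D assume "D \<in> components E (H - {r})"
    then obtain x where x: "x \<in> H - {r}" "D = component E (H - {r}) x" unfolding components_def by blast
    show "D \<in> components E (C0 - {r}) \<union> (components E H - {C0})"
    proof (cases "x \<in> C0")
      case True
      have "D = component E (C0 - {r}) x" using comp_split_in[OF assms(1) x(1), of C0] True assms(3) x(2) by simp
      moreover have "x \<in> C0 - {r}" using True x(1) by simp
      ultimately show ?thesis using comp_in_comps[of x "C0 - {r}" E] by simp
    next
      case False
      have D: "D = component E H x" using comp_split_out[OF assms(1) x(1) _ assms(2)] False assms(3) x(2) by simp
      have "D \<noteq> C0" using False D comp_self[of x H E] x(1) by auto
      moreover have "D \<in> components E H" using D comp_in_comps[of x H E] x(1) by simp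
      ultimately show ?thesis by simp
    qed
  qed
  show "components E (C0 - {r}) \<union> (components E H - {C0}) \<subseteq> components E (H - {r})"
  proof
    fix D assume D: "D \<in> components E (C0 - {r}) \<union> (components E H - {C0})"
    show "D \<in> components E (H - {r})"
    proof (cases "D \<in> components E (C0 - {r})")
      case True
      then obtain x where x: "x \<in> C0 - {r}" "D = component E (C0 - {r}) x" unfolding components_def by blast
      have xH: "x \<in> H - {r}" using x(1) C0H by blast
      have "D = component E (H - {r}) x" using comp_split_in[OF assms(1) xH, of C0] x assms(3) by simp
      then show ?thesis using comp_in_comps[of x "H - {r}" E] xH by simp
    next
      case False
      then have D2: "D \<in> components E H" "D \<noteq> C0" using D by auto
      then obtain x where x: "x \<in> H" "D = component E H x" unfolding components_def by blast
      have xC: "x \<notin> C0"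
      proof
        assume "x \<in> C0"
        then have "component E H x = C0" using comp_eq[OF assms(1)] assms(3) by simp
        then show False using D2 x by simp
      qed
      have xr: "x \<noteq> r" using xC assms(2,3) comp_self[of r H E] by auto
      have xH: "x \<in> H - {r}" using x(1) xr by simp
      have "D = component E (H - {r}) x" using comp_split_out[OF assms(1) xH _ assms(2)] xC assms(3) x(2) by simp
      then show ?thesis using comp_in_comps[of x "H - {r}" E] xH by simp
    qed
  qed
qed

lemma LB: assumes "sym E"
  shows "search_tree E S T \<Longrightarrow> \<forall>H. H \<subseteq> S \<longrightarrow> (\<forall>x\<in>S. 0 \<le> w x) \<longrightarrow>
     (\<Sum>C\<in>components E H. OPT C E w) \<le> cw w H T"
proof (induction rule: search_tree.induct)
  case (1 r S ts)
  have st: "search_tree E S (Node r ts)" using 1 by (intro search_tree.intros) auto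
  have VS: "vset (Node r ts) = S" using st_vset[OF st] .
  have fS: "finite S" using VS vset_finite by metis
  show ?case
  proof (intro allI impI)
    fix H assume HS: "H \<subseteq> S" and nn: "\<forall>x\<in>S. 0 \<le> w x"
    have IH: "(\<Sum>C\<in>components E K. OPT C E w) \<le> cw w K t" if t: "t \<in> set ts" "K \<subseteq> vset t" for t K
    proof -
      have "vset t \<subseteq> S" using st_child_sub[OF st t(1)] by blast
      then show ?thesis using 1(4) t nn by blast
    qed
    show "(\<Sum>C\<in>components E H. OPT C E w) \<le> cw w H (Node r ts)"
    proof (cases "r \<in> H")
      case False
      then have H': "H \<subseteq> S - {r}" using HS by blast
      have "(\<Sum>C\<in>components E H. OPT C E w) \<le> sum_list (map (cw w H) ts)"
        by (rule SPLIT[OF assms st H' IH])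
      also have "\<dots> = cw w H (Node r ts)" unfolding cw.simps if_not_P[OF False] by simp
      finally show ?thesis .
    next
      case True
      define C0 where "C0 = component E H r"
      have fH: "finite H" using HS fS finite_subset by blast
      have C0in: "C0 \<in> components E H" unfolding C0_def using True by (rule comp_in_comps)
      have C0H: "C0 \<subseteq> H" unfolding C0_def by (rule comp_sub)
      have rC0: "r \<in> C0" unfolding C0_def using True by (rule comp_self)
      have fC0: "finite C0" using C0H fH finite_subset by blast
      have fc: "finite (components E H)" using fH by (rule comps_finite)
      have eq1: "(\<Sum>C\<in>components E H. OPT C E w) = OPT C0 E w + (\<Sum>C\<in>components E H - {C0}. OPT C E w)"
        using sum.remove[OF fc C0in] .
      have split: "components E (H - {r}) = components E (C0 - {r}) \<union> (components E H - {C0})"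
        using comp_split[OF assms True C0_def] .
      have disj: "components E (C0 - {r}) \<inter> (components E H - {C0}) = {}"
      proof (rule ccontr)
        assume "components E (C0 - {r}) \<inter> (components E H - {C0}) \<noteq> {}"
        then obtain D where D: "D \<in> components E (C0 - {r})" "D \<in> components E H" "D \<noteq> C0" by blast
        have "D \<inter> C0 = {}" using comps_disj[OF assms D(2) C0in D(3)] .
        moreover have "D \<subseteq> C0" using comps_sub[OF D(1)] by blast
        ultimately show False using comps_ne[OF D(1)] by blast
      qed
      have f1: "finite (components E (C0 - {r}))" using fC0 by (simp add: comps_finite)
      have eq2: "(\<Sum>C\<in>components E (H - {r}). OPT C E w) =
          (\<Sum>C\<in>components E (C0 - {r}). OPT C E w) + (\<Sum>C\<in>components E H - {C0}. OPT C E w)"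
        unfolding split by (rule sum.union_disjoint) (use f1 fc disj in auto)
      have cons: "OPT C0 E w \<le> sum w C0 + (\<Sum>D\<in>components E (C0 - {r}). OPT D E w)"
        using CONS[OF assms fC0 rC0] .
      have H': "H - {r} \<subseteq> S - {r}" using HS by blast
      have spl: "(\<Sum>C\<in>components E (H - {r}). OPT C E w) \<le> sum_list (map (cw w (H - {r})) ts)"
        by (rule SPLIT[OF assms st H' IH])
      have "map (cw w (H - {r})) ts = map (cw w H) ts"
      proof (rule map_cong)
        fix t assume t: "t \<in> set ts"
        have "vset t \<subseteq> - {r}" using st_child_sub[OF st t] by blast
        then have "cw w (H \<inter> - {r}) t = cw w H t" by (rule cw_inter)
        then show "cw w (H - {r}) t = cw w H t" by (simp add: Diff_eq)
      qed simp
      then have m: "sum_list (map (cw w (H - {r})) ts) = sum_list (map (cw w H) ts)" by (rule arg_cong)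
      have wC: "sum w C0 \<le> sum w H" by (rule sum_mono2[OF fH C0H]) (use nn HS in auto)
      have cwT: "cw w H (Node r ts) = sum w H + sum_list (map (cw w H) ts)"
      proof -
        have "H \<inter> vset (Node r ts) = H" using VS HS by blast
        then show ?thesis unfolding cw.simps if_P[OF True] by simp
      qed
      show ?thesis using eq1 eq2 cons spl m wC cwT by linarith
    qed
  qed
qed



lemma PATH: assumes "sym E" "C \<in> components E (S - {r})"
  shows "(restr_rel E S)\<^sup>*\<^sup>* x y \<Longrightarrow> x \<in> C \<Longrightarrow> y \<notin> C \<Longrightarrow> (restr_rel E (C \<union> {r}))\<^sup>*\<^sup>* x r"
proof (induction rule: converse_rtranclp_induct)
  case base then show ?case by simp
next
  case (step x z)
  show ?case
  proof (cases "z \<in> C")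
    case True
    have "restr_rel E (C \<union> {r}) x z" using step(1) step(4) True by (simp add: restr_rel_def)
    then show ?thesis using step(3)[OF True step(5)] by (rule converse_rtranclp_into_rtranclp)
  next
    case False
    have CS: "C \<subseteq> S - {r}" using comps_sub[OF assms(2)] .
    have "z = r"
    proof (rule ccontr)
      assume zr: "z \<noteq> r"
      have "restr_rel E (S - {r}) x z" using step(1) step(4) CS zr by (auto simp: restr_rel_def)
      then have "(restr_rel E (S - {r}))\<^sup>*\<^sup>* x z" by simp
      then have "z \<in> component E (S - {r}) x" using step(4) CS unfolding component_def by blast
      moreover have "C = component E (S - {r}) x" using comps_mem[OF assms step(4)] .
      ultimately show False using False by simp
    qed
    then have "restr_rel E (C \<union> {r}) x r" using step(1) step(4) by (simp add: restr_rel_def)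
    then show ?thesis by simp
  qed
qed

lemma QSUB: assumes "sym E" "conn E S" "r \<in> S" "Hj \<in> components E (S - {r})" "s \<in> Hj"
  shows "S - Hj \<subseteq> component E (S - {s}) r"
proof
  fix x assume x: "x \<in> S - Hj"
  have HjS: "Hj \<subseteq> S - {r}" using comps_sub[OF assms(4)] .
  have rs: "r \<in> S - {s}" using assms(3,5) HjS by blast
  show "x \<in> component E (S - {s}) r"
  proof (cases "x = r")
    case True then show ?thesis using comp_self[OF rs] by simp
  next
    case False
    define Hi where "Hi = component E (S - {r}) x"
    have xr: "x \<in> S - {r}" using x False by simp
    have Hi: "Hi \<in> components E (S - {r})" unfolding Hi_def using xr by (rule comp_in_comps)
    have xHi: "x \<in> Hi" unfolding Hi_def using xr by (rule comp_self)
    have "Hi \<noteq> Hj" using xHi x by blast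
    then have sHi: "s \<notin> Hi" using comps_disj[OF assms(1) Hi assms(4)] assms(5) by blast
    have p: "(restr_rel E S)\<^sup>*\<^sup>* x s" using rtr_conn[OF assms(2)] x assms(5) HjS by blast
    have "(restr_rel E (Hi \<union> {r}))\<^sup>*\<^sup>* x r" using PATH[OF assms(1) Hi p xHi sHi] .
    moreover have "Hi \<union> {r} \<subseteq> S - {s}" using comps_sub[OF Hi] sHi rs by blast
    ultimately have "(restr_rel E (S - {s}))\<^sup>*\<^sup>* x r" by (rule rtr_mono)
    then have "(restr_rel E (S - {s}))\<^sup>*\<^sup>* r x" using rtr_sym[OF assms(1)] by blast
    then show ?thesis using rs unfolding component_def by blast
  qed
qed



lemma EXTRA: assumes "sym E" "finite S" "conn E S" "r \<in> S" "\<forall>x\<in>S. 0 \<le> w x"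
  defines "\<H> \<equiv> components E (S - {r})"
  defines "Y \<equiv> OPT S E w - (\<Sum>H\<in>\<H>. OPT H E w)"
  shows "Y \<ge> sum w S \<or> (\<exists>Hj\<in>\<H>. \<exists>Hi\<in>\<H>. Y \<ge> sum w S - sum w Hj + w r \<and>
     (Y \<ge> 2 * (sum w S - sum w Hj) \<or> Y \<ge> 2 * (sum w S - sum w Hj) - sum w Hi + w r))"
proof -
  have Sne: "S \<noteq> {}" using assms(4) by blast
  obtain T where T: "search_tree E S T" "cost w T = OPT S E w" using opt_props(1)[OF assms(2) Sne] by blast
  obtain s ss where Ts: "T = Node s ss" by (cases T)
  note st = T(1)[unfolded Ts]
  have VS: "vset (Node s ss) = S" using st_vset[OF st] .
  have fH: "finite \<H>" unfolding \<H>_def using assms(2) by (simp add: comps_finite)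
  have HS: "H \<subseteq> S - {r}" if "H \<in> \<H>" for H using comps_sub[OF that[unfolded \<H>_def]] .
  define Df where "Df u = cw w S u - (\<Sum>H\<in>\<H>. cw w H u)" for u
  have OPTS: "OPT S E w = cw w S (Node s ss)"
  proof -
    have "OPT S E w = cw w UNIV (Node s ss)" using T(2) cost_cw[OF assms(1) st] Ts by simp
    also have "\<dots> = cw w (UNIV \<inter> vset (Node s ss)) (Node s ss)" by (rule cw_vset)
    also have "\<dots> = cw w S (Node s ss)" unfolding VS by simp
    finally show ?thesis .
  qed
  have OPTH: "OPT H E w \<le> cw w H (Node s ss)" if H: "H \<in> \<H>" for H
  proof -
    have "components E H = {H}"
      using conn_comps[OF conn_comp[OF assms(1) H[unfolded \<H>_def]] comps_ne[OF H[unfolded \<H>_def]]] .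
    moreover have "H \<subseteq> S" using HS[OF H] by blast
    moreover have "(\<Sum>C\<in>components E H. OPT C E w) \<le> cw w H (Node s ss)"
      using LB[OF assms(1) st] assms(5) calculation(2) by blast
    ultimately show ?thesis by simp
  qed
  have YZ: "Y \<ge> Df (Node s ss)"
  proof -
    have "(\<Sum>H\<in>\<H>. OPT H E w) \<le> (\<Sum>H\<in>\<H>. cw w H (Node s ss))" by (rule sum_mono) (rule OPTH)
    then show ?thesis unfolding Y_def Df_def OPTS by linarith
  qed
  have Dr: "cw w {r} u \<le> Df u" for u
  proof -
    have rn: "{r} \<notin> \<H>" using HS by blast
    have "(\<Sum>F\<in>insert {r} \<H>. cw w F u) \<le> cw w S u"
    proof (rule SA)
      show "finite (insert {r} \<H>)" using fH by simp
      show "\<Union>(insert {r} \<H>) \<subseteq> S" using HS assms(4) by blast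
      show "\<forall>x\<in>S. 0 \<le> w x" by fact
      fix F G assume FG: "F \<in> insert {r} \<H>" "G \<in> insert {r} \<H>" "F \<noteq> G"
      show "F \<inter> G = {}"
      proof (cases "F = {r}")
        case True
        then have "G \<in> \<H>" using FG by auto
        then show ?thesis using True HS by blast
      next
        case False
        then have F: "F \<in> \<H>" using FG by auto
        show ?thesis
        proof (cases "G = {r}")
          case True then show ?thesis using F HS by blast
        next
          case False
          then have "G \<in> \<H>" using FG by auto
          then show ?thesis using comps_disj[OF assms(1)] F FG(3) unfolding \<H>_def by blast
        qed
      qed
    qed
    then show ?thesis unfolding Df_def using sum.insert[OF fH rn, of "\<lambda>F. cw w F u"] by simp
  qed
  have Dnn: "0 \<le> Df u" for u using Dr[of u] cw_nn[of "{r}" w u] assms(4,5) by force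
  have unfold: "Df (Node x us) = sum w (vset (Node x us))
      - (\<Sum>H\<in>\<H>. if x \<in> H then sum w (H \<inter> vset (Node x us)) else 0) + sum_list (map Df us)"
    if sub: "vset (Node x us) \<subseteq> S" for x us
  proof -
    have x: "x \<in> S" using sub by simp
    have a: "cw w S (Node x us) = sum w (vset (Node x us)) + sum_list (map (cw w S) us)"
    proof -
      have "S \<inter> vset (Node x us) = vset (Node x us)" using sub by blast
      then show ?thesis unfolding cw.simps if_P[OF x] by simp
    qed
    have b: "(\<Sum>H\<in>\<H>. cw w H (Node x us)) = (\<Sum>H\<in>\<H>. if x \<in> H then sum w (H \<inter> vset (Node x us)) else 0)
        + sum_list (map (\<lambda>u. \<Sum>H\<in>\<H>. cw w H u) us)"
      by (simp only: cw.simps sum.distrib sum_swap_list)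
    have c: "sum_list (map Df us) = sum_list (map (cw w S) us) - sum_list (map (\<lambda>u. \<Sum>H\<in>\<H>. cw w H u) us)"
      unfolding Df_def by (rule sum_list_subtractf)
    show ?thesis unfolding Df_def[of "Node x us"] using a b c unfolding Df_def by linarith
  qed
  show ?thesis
  proof (cases "s = r")
    case True
    have "(\<Sum>H\<in>\<H>. if s \<in> H then sum w (H \<inter> S) else 0) = 0"
      by (rule sum_none) (use True HS in blast)
    moreover have "0 \<le> sum_list (map Df ss)" by (rule sum_list_nonneg') (rule Dnn)
    ultimately have "Df (Node s ss) \<ge> sum w S" using unfold[of s ss, unfolded VS, OF subset_refl] by linarith
    then show ?thesis using YZ by linarith
  next
    case False
    have sS: "s \<in> S - {r}" using st_inv(1)[OF st] False by simp
    define Hj where "Hj = component E (S - {r}) s"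
    have Hj: "Hj \<in> \<H>" unfolding Hj_def \<H>_def using sS by (rule comp_in_comps)
    have sHj: "s \<in> Hj" unfolding Hj_def using sS by (rule comp_self)
    have HjS: "Hj \<subseteq> S" using HS[OF Hj] by blast
    have uniq: "\<And>H x. H \<in> \<H> \<Longrightarrow> x \<in> S - {r} \<Longrightarrow> x \<in> H \<longleftrightarrow> H = component E (S - {r}) x"
    proof -
      fix H x assume H: "H \<in> \<H>" and x: "x \<in> S - {r}"
      show "x \<in> H \<longleftrightarrow> H = component E (S - {r}) x"
      proof
        assume "x \<in> H" then show "H = component E (S - {r}) x" using comps_mem[OF assms(1) H[unfolded \<H>_def]] by blast
      next
        assume "H = component E (S - {r}) x" then show "x \<in> H" using comp_self[OF x] by simp
      qed
    qed
    have top: "(\<Sum>H\<in>\<H>. if s \<in> H then sum w (H \<inter> vset (Node s ss)) else 0) = sum w (Hj \<inter> vset (Node s ss))"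
      by (rule sum_unique[OF fH Hj]) (use uniq[OF _ sS] Hj_def in blast)
    have "Hj \<inter> S = Hj" using HjS by blast
    then have DT: "Df (Node s ss) = sum w S - sum w Hj + sum_list (map Df ss)"
      using unfold[of s ss, unfolded VS] top[unfolded VS] by simp
    obtain u0 where u0: "u0 \<in> set ss" "r \<in> vset u0" using child_of[OF st assms(4)] False by metis
    have sum_ss: "Df u0 \<le> sum_list (map Df ss)" by (rule le_sum_list_mem[OF u0(1)]) (rule Dnn)
    have wr: "w r \<le> Df u0" using cw_single[OF u0(2), of w] assms(4,5) Dr[of u0] by simp
    obtain s' us' where u0s: "u0 = Node s' us'" by (cases u0)
    have st0: "search_tree E (vset u0) (Node s' us')" using st_inv(4)[OF st u0(1)] u0s by simp
    have V0c: "vset u0 \<in> components E (S - {s})" using st_child_comp[OF st u0(1)] .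
    have V0: "vset u0 = component E (S - {s}) r" using comps_mem[OF assms(1) V0c u0(2)] .
    have Q: "S - Hj \<subseteq> vset u0" using QSUB[OF assms(1,3,4) Hj[unfolded \<H>_def] sHj] V0 by simp
    have V0S: "vset u0 \<subseteq> S" using comps_sub[OF V0c] by blast
    have fS0: "finite (vset u0)" by (rule vset_finite)
    have wV0: "sum w S - sum w Hj \<le> sum w (vset u0)"
    proof -
      have "sum w (S - Hj) = sum w S - sum w Hj" using sum_diff[OF assms(2) HjS] .
      moreover have "sum w (S - Hj) \<le> sum w (vset u0)" by (rule sum_mono2[OF fS0 Q]) (use V0S assms(5) in auto)
      ultimately show ?thesis by simp
    qed
    have s'V: "s' \<in> vset u0" using st_inv(1)[OF st0] .
    have unf0: "Df u0 = sum w (vset u0)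
      - (\<Sum>H\<in>\<H>. if s' \<in> H then sum w (H \<inter> vset u0) else 0) + sum_list (map Df us')"
      using unfold[of s' us', folded u0s] V0S by simp
    have nn': "0 \<le> sum_list (map Df us')" by (rule sum_list_nonneg') (rule Dnn)
    have first: "Y \<ge> sum w S - sum w Hj + w r" using YZ DT sum_ss wr by linarith
    show ?thesis
    proof (cases "s' = r")
      case True
      have "(\<Sum>H\<in>\<H>. if s' \<in> H then sum w (H \<inter> vset u0) else 0) = 0"
        by (rule sum_none) (use True HS in blast)
      then have "Df u0 \<ge> sum w S - sum w Hj" using unf0 nn' wV0 by linarith
      then have "Y \<ge> 2 * (sum w S - sum w Hj)" using YZ DT sum_ss unfolding mult_2 by linarith
      then show ?thesis using first Hj by blast
    next
      case False
      have s'S: "s' \<in> S - {r}" using s'V V0S False by blast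
      define Hi where "Hi = component E (S - {r}) s'"
      have Hi: "Hi \<in> \<H>" unfolding Hi_def \<H>_def using s'S by (rule comp_in_comps)
      have "(\<Sum>H\<in>\<H>. if s' \<in> H then sum w (H \<inter> vset u0) else 0) = sum w (Hi \<inter> vset u0)"
        by (rule sum_unique[OF fH Hi]) (use uniq[OF _ s'S] Hi_def in blast)
      moreover have "sum w (Hi \<inter> vset u0) \<le> sum w Hi"
      proof (rule sum_mono2)
        show "finite Hi" using HS[OF Hi] assms(2) finite_subset by blast
        show "Hi \<inter> vset u0 \<subseteq> Hi" by blast
        show "\<And>b. b \<in> Hi - Hi \<inter> vset u0 \<Longrightarrow> 0 \<le> w b" using HS[OF Hi] assms(5) by blast
      qed
      moreover obtain v where v: "v \<in> set us'" "r \<in> vset v"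
        using child_of[OF st0, of r] u0(2) u0s False by auto
      moreover have "Df v \<le> sum_list (map Df us')" by (rule le_sum_list_mem[OF v(1)]) (rule Dnn)
      moreover have "w r \<le> Df v" using cw_single[OF v(2), of w] assms(4,5) Dr[of v] by simp
      ultimately have "Df u0 \<ge> sum w S - sum w Hj - sum w Hi + w r" using unf0 wV0 by linarith
      then have "Y \<ge> 2 * (sum w S - sum w Hj) - sum w Hi + w r" using YZ DT sum_ss unfolding mult_2 by linarith
      then show ?thesis using first Hj Hi by blast
    qed
  qed
qed



lemma MAIN: assumes "sym E" "0 \<le> \<alpha>"
  and ARITH0: "\<forall>m wr a b Y. 0 \<le> wr \<longrightarrow> wr \<le> m \<longrightarrow> 0 \<le> a \<longrightarrow> a \<le> \<alpha> * m \<longrightarrow> 0 \<le> b \<longrightarrow> b \<le> \<alpha> * m \<longrightarrow>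
     (Y \<ge> m \<or> (Y \<ge> m - a + wr \<and> (Y \<ge> 2 * (m - a) \<or> Y \<ge> 2 * (m - a) - b + wr))) \<longrightarrow> Y \<ge> c * m + \<beta> * wr"
  shows "search_tree E S T \<Longrightarrow> conn E S \<longrightarrow> (\<forall>u\<in>subtrees T. is_centroid E w \<alpha> (vset u) (root u))
    \<longrightarrow> (\<forall>x\<in>S. 0 \<le> w x) \<longrightarrow> c * cost w T \<le> OPT S E w - \<beta> * sum w S"
proof (induction rule: search_tree.induct)
  case (1 r S ts)
  note ARITH = ARITH0[rule_format]
  have st: "search_tree E S (Node r ts)" using 1 by (intro search_tree.intros) auto
  have VS: "vset (Node r ts) = S" using st_vset[OF st] .
  have fS: "finite S" using VS vset_finite by metis
  have dts: "distinct ts" using st_distinct[OF st] .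
  show ?case
  proof (intro impI)
    assume conn: "conn E S" and cent: "\<forall>u\<in>subtrees (Node r ts). is_centroid E w \<alpha> (vset u) (root u)"
      and nn: "\<forall>x\<in>S. 0 \<le> w x"
    define \<H> where "\<H> = components E (S - {r})"
    have HS: "H \<subseteq> S - {r}" if "H \<in> \<H>" for H using comps_sub[OF that[unfolded \<H>_def]] .
    have IH: "c * cost w t \<le> OPT (vset t) E w - \<beta> * sum w (vset t)" if t: "t \<in> set ts" for t
    proof -
      have "conn E (vset t)" using conn_comp[OF assms(1) st_child_comp[OF st t]] .
      moreover have "\<forall>u\<in>subtrees t. is_centroid E w \<alpha> (vset u) (root u)"
      proof
        fix u assume "u \<in> subtrees t"
        then have "u \<in> subtrees (Node r ts)" using t by auto
        then show "is_centroid E w \<alpha> (vset u) (root u)" using cent by blast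
      qed
      moreover have "\<forall>x\<in>vset t. 0 \<le> w x" using st_child_sub[OF st t] nn by blast
      ultimately show ?thesis using 1(4) t by blast
    qed
    have costT: "cost w (Node r ts) = sum w S + (\<Sum>t\<in>set ts. cost w t)"
    proof -
      have "cost w (Node r ts) = cw w UNIV (Node r ts)" using cost_cw[OF assms(1) st] .
      also have "\<dots> = sum w S + sum_list (map (cw w UNIV) ts)" unfolding cw_node_univ VS ..
      also have "sum_list (map (cw w UNIV) ts) = (\<Sum>t\<in>set ts. cw w UNIV t)" using sum_list_set[OF dts] .
      also have "\<dots> = (\<Sum>t\<in>set ts. cost w t)"
        by (rule sum.cong) (use cost_cw[OF assms(1) st_inv(4)[OF st]] in auto)
      finally show ?thesis .
    qed
    have inj: "inj_on vset (set ts)" using st_inv(2)[OF st] by (simp add: distinct_map)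
    have img: "vset ` set ts = \<H>" using st_inv(3)[OF st] unfolding \<H>_def by simp
    have reidx: "(\<Sum>t\<in>set ts. f (vset t)) = (\<Sum>H\<in>\<H>. f H)" for f :: "'a set \<Rightarrow> real"
      using sum.reindex[OF inj, of f] img by simp
    have wsum: "(\<Sum>t\<in>set ts. sum w (vset t)) = sum w S - w r" using st_sum_vset[OF assms(1) st, of w] by simp
    have "c * cost w (Node r ts) = c * sum w S + (\<Sum>t\<in>set ts. c * cost w t)"
      unfolding costT by (simp add: algebra_simps sum_distrib_left)
    also have "(\<Sum>t\<in>set ts. c * cost w t) \<le> (\<Sum>t\<in>set ts. OPT (vset t) E w - \<beta> * sum w (vset t))"
      by (rule sum_mono) (rule IH)
    also have "\<dots> = (\<Sum>H\<in>\<H>. OPT H E w) - \<beta> * (sum w S - w r)"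
    proof -
      have "(\<Sum>t\<in>set ts. OPT (vset t) E w - \<beta> * sum w (vset t)) =
          (\<Sum>t\<in>set ts. OPT (vset t) E w) - \<beta> * (\<Sum>t\<in>set ts. sum w (vset t))"
        by (simp add: sum_subtractf sum_distrib_left)
      also have "(\<Sum>t\<in>set ts. OPT (vset t) E w) = (\<Sum>H\<in>\<H>. OPT H E w)" by (rule reidx)
      finally show ?thesis unfolding wsum .
    qed
    finally have L: "c * cost w (Node r ts) \<le> c * sum w S + (\<Sum>H\<in>\<H>. OPT H E w) - \<beta> * (sum w S - w r)"
      by simp
    define Y where "Y = OPT S E w - (\<Sum>H\<in>\<H>. OPT H E w)"
    have ex: "Y \<ge> sum w S \<or> (\<exists>Hj\<in>\<H>. \<exists>Hi\<in>\<H>. Y \<ge> sum w S - sum w Hj + w r \<and>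
     (Y \<ge> 2 * (sum w S - sum w Hj) \<or> Y \<ge> 2 * (sum w S - sum w Hj) - sum w Hi + w r))"
      using EXTRA[OF assms(1) fS conn st_inv(1)[OF st] nn] unfolding Y_def \<H>_def .
    have cr: "is_centroid E w \<alpha> S r" using cent VS by force
    have Hal: "sum w H \<le> \<alpha> * sum w S" if "H \<in> \<H>" for H using cr that unfolding is_centroid_def \<H>_def by blast
    have Hnn: "0 \<le> sum w H" if "H \<in> \<H>" for H using HS[OF that] nn by (intro sum_nonneg) blast
    have wr0: "0 \<le> w r" using nn st_inv(1)[OF st] by blast
    have wrS: "w r \<le> sum w S" using member_le_sum[OF st_inv(1)[OF st] _ fS, of w] nn by blast
    have "Y \<ge> c * sum w S + \<beta> * w r"
    proof (cases "Y \<ge> sum w S")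
      case True
      show ?thesis by (rule ARITH[OF wr0 wrS order_refl _ order_refl]) (use True wr0 wrS mult_nonneg_nonneg[OF assms(2), of "sum w S"] in auto)
    next
      case False
      then obtain Hj Hi where H: "Hj \<in> \<H>" "Hi \<in> \<H>" "Y \<ge> sum w S - sum w Hj + w r"
        "Y \<ge> 2 * (sum w S - sum w Hj) \<or> Y \<ge> 2 * (sum w S - sum w Hj) - sum w Hi + w r" using ex by blast
      show ?thesis by (rule ARITH[OF wr0 wrS Hnn[OF H(1)] Hal[OF H(1)] Hnn[OF H(2)] Hal[OF H(2)]]) (use H in blast)
    qed
    then show "c * cost w (Node r ts) \<le> OPT S E w - \<beta> * sum w S" using L unfolding Y_def
      by (simp add: algebra_simps)
  qed
qed



lemma OPT_ge: assumes "sym E" "finite V" "V \<noteq> {}" "\<forall>x\<in>V. 0 \<le> w x"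
  shows "sum w V \<le> OPT V E w"
proof -
  obtain T where T: "search_tree E V T" "cost w T = OPT V E w" using opt_props(1)[OF assms(2,3)] by blast
  obtain s ss where Ts: "T = Node s ss" by (cases T)
  note st = T(1)[unfolded Ts]
  have VS: "vset (Node s ss) = V" using st_vset[OF st] .
  have "OPT V E w = cw w UNIV (Node s ss)" using T(2) cost_cw[OF assms(1) st] Ts by simp
  also have "\<dots> = cw w (UNIV \<inter> vset (Node s ss)) (Node s ss)" by (rule cw_vset)
  also have "\<dots> = cw w V (Node s ss)" unfolding VS by simp
  also have "\<dots> = sum w V + sum_list (map (cw w V) ss)"
  proof -
    have s: "s \<in> V" using st_inv(1)[OF st] .
    have "V \<inter> vset (Node s ss) = V" using VS by blast
    then show ?thesis unfolding cw.simps if_P[OF s] by simp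
  qed
  finally have "OPT V E w = sum w V + sum_list (map (cw w V) ss)" .
  moreover have "0 \<le> sum_list (map (cw w V) ss)" by (rule sum_list_nonneg') (rule cw_nn[OF assms(4)])
  ultimately show ?thesis by simp
qed

lemma cent_bound: assumes "is_tree V E" "\<forall>x\<in>V. 0 \<le> w x" "0 \<le> \<alpha>" "0 < c" "\<beta> \<le> 1"
  and ARITH: "\<And>m wr a b Y. 0 \<le> wr \<Longrightarrow> wr \<le> m \<Longrightarrow> 0 \<le> a \<Longrightarrow> a \<le> \<alpha> * m \<Longrightarrow> 0 \<le> b \<Longrightarrow> b \<le> \<alpha> * m \<Longrightarrow>
     (Y \<ge> m \<or> (Y \<ge> m - a + wr \<and> (Y \<ge> 2 * (m - a) \<or> Y \<ge> 2 * (m - a) - b + wr))) \<Longrightarrow> Y \<ge> c * m + \<beta> * wr"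
  shows "cent \<alpha> V E w \<le> 1 / c * OPT V E w - \<beta> / c * sum w V"
proof -
  have fV: "finite V" and Vne: "V \<noteq> {}" and sE: "sym E"
    and pth: "\<forall>x\<in>V. \<forall>y\<in>V. (restr_rel E V)\<^sup>*\<^sup>* x y" using assms(1) unfolding is_tree_def by auto
  have conn: "conn E V" unfolding conn_def
  proof
    fix x assume x: "x \<in> V"
    show "component E V x = V"
    proof
      show "component E V x \<subseteq> V" by (rule comp_sub)
      show "V \<subseteq> component E V x" using x pth unfolding component_def by blast
    qed
  qed
  have rhs: "1 / c * OPT V E w - \<beta> / c * sum w V = (OPT V E w - \<beta> * sum w V) / c"
    by (simp add: diff_divide_distrib)
  have key: "cost w T \<le> 1 / c * OPT V E w - \<beta> / c * sum w V" if T: "centroid_tree V E w \<alpha> T" for T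
  proof -
    have "c * cost w T \<le> OPT V E w - \<beta> * sum w V"
    proof -
      have A0: "\<forall>m wr a b Y. 0 \<le> wr \<longrightarrow> wr \<le> m \<longrightarrow> 0 \<le> a \<longrightarrow> a \<le> \<alpha> * m \<longrightarrow> 0 \<le> b \<longrightarrow> b \<le> \<alpha> * m \<longrightarrow>
       (Y \<ge> m \<or> (Y \<ge> m - a + wr \<and> (Y \<ge> 2 * (m - a) \<or> Y \<ge> 2 * (m - a) - b + wr))) \<longrightarrow> Y \<ge> c * m + \<beta> * wr"
        using ARITH by blast
      show ?thesis using MAIN[OF sE assms(3) A0] T conn assms(2) unfolding centroid_tree_def by blast
    qed
    then show ?thesis unfolding rhs using assms(4) by (simp add: pos_le_divide_eq mult.commute)
  qed
  show ?thesis
  proof (cases "\<exists>T. centroid_tree V E w \<alpha> T")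
    case True
    have sub: "{cost w T | T. centroid_tree V E w \<alpha> T} \<subseteq> cost w ` {T. search_tree E V T}"
      unfolding centroid_tree_def by blast
    have fin: "finite {cost w T | T. centroid_tree V E w \<alpha> T}"
      using finite_subset[OF sub] st_finite[OF fV] by blast
    have ne: "{cost w T | T. centroid_tree V E w \<alpha> T} \<noteq> {}" using True by blast
    have "Max {cost w T | T. centroid_tree V E w \<alpha> T} \<le> 1 / c * OPT V E w - \<beta> / c * sum w V"
      by (rule Max.boundedI[OF fin ne]) (use key in blast)
    then show ?thesis unfolding cent_def using True by simp
  next
    case False
    have o: "sum w V \<le> OPT V E w" using OPT_ge[OF sE fV Vne assms(2)] .
    have m0: "0 \<le> sum w V" using assms(2) by (intro sum_nonneg) blast
    have "\<beta> * sum w V \<le> sum w V"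
    proof (cases "\<beta> \<le> 0")
      case True then show ?thesis using m0 by (meson mult_nonpos_nonneg order_trans)
    next
      case False then show ?thesis using m0 assms(5) by (simp add: mult_left_le_one_le)
    qed
    then have "0 \<le> (OPT V E w - \<beta> * sum w V) / c" using o assms(4) by simp
    moreover have "cent \<alpha> V E w = 0" unfolding cent_def using False by (simp only: if_False)
    ultimately show ?thesis unfolding rhs by simp
  qed
qed

theorem theorem7:
  fixes V :: "'a set" and E :: "('a \<times> 'a) set" and w :: "'a \<Rightarrow> real"
  assumes "is_tree V E"
    and "\<forall>x\<in>V. w x \<ge> 0"
  shows "(\<forall>\<alpha>::real. 0 < \<alpha> \<and> \<alpha> < 1 \<longrightarrow>
           cent \<alpha> V E w \<le> 1 / (1 - \<alpha>) * OPT V E w - \<alpha> / (1 - \<alpha>) * sum w V)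
       \<and> (\<forall>\<alpha>::real. 1/3 \<le> \<alpha> \<and> \<alpha> \<le> 1/2 \<longrightarrow>
           cent \<alpha> V E w \<le> 1 / (2 - 3 * \<alpha>) * OPT V E w - (3 * \<alpha> - 1) / (2 - 3 * \<alpha>) * sum w V)"
proof (intro conjI allI impI)
  fix \<alpha> :: real assume a: "0 < \<alpha> \<and> \<alpha> < 1"
  show "cent \<alpha> V E w \<le> 1 / (1 - \<alpha>) * OPT V E w - \<alpha> / (1 - \<alpha>) * sum w V"
  proof (rule cent_bound[OF assms])
    show "0 \<le> \<alpha>" "0 < 1 - \<alpha>" "\<alpha> \<le> 1" using a by auto
    fix m wr aa b Y :: real
    assume h: "0 \<le> wr" "wr \<le> m" "0 \<le> aa" "aa \<le> \<alpha> * m" "0 \<le> b" "b \<le> \<alpha> * m"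
      "Y \<ge> m \<or> (Y \<ge> m - aa + wr \<and> (Y \<ge> 2 * (m - aa) \<or> Y \<ge> 2 * (m - aa) - b + wr))"
    have p1: "\<alpha> * wr \<le> \<alpha> * m" using h(2) a by (simp add: mult_left_mono)
    have p2: "\<alpha> * wr \<le> wr" using h(1) a by (simp add: mult_left_le_one_le)
    have "(1 - \<alpha>) * m + \<alpha> * wr = m - \<alpha> * m + \<alpha> * wr" by (simp add: algebra_simps)
    then show "(1 - \<alpha>) * m + \<alpha> * wr \<le> Y"
      using h(7)[unfolded right_diff_distrib] by (elim disjE conjE) (use h(1-6) p1 p2 in linarith)+
  qed
next
  fix \<alpha> :: real assume a: "1/3 \<le> \<alpha> \<and> \<alpha> \<le> 1/2"
  show "cent \<alpha> V E w \<le> 1 / (2 - 3 * \<alpha>) * OPT V E w - (3 * \<alpha> - 1) / (2 - 3 * \<alpha>) * sum w V"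
  proof (rule cent_bound[OF assms])
    show "0 \<le> \<alpha>" "0 < 2 - 3 * \<alpha>" "3 * \<alpha> - 1 \<le> 1" using a by auto
    fix m wr aa b Y :: real
    assume h: "0 \<le> wr" "wr \<le> m" "0 \<le> aa" "aa \<le> \<alpha> * m" "0 \<le> b" "b \<le> \<alpha> * m"
      "Y \<ge> m \<or> (Y \<ge> m - aa + wr \<and> (Y \<ge> 2 * (m - aa) \<or> Y \<ge> 2 * (m - aa) - b + wr))"
    have m0: "0 \<le> m" using h by linarith
    have p1: "(3 * \<alpha> - 1) * wr \<le> (3 * \<alpha> - 1) * m" using h(2) a by (intro mult_left_mono) auto
    have p2: "0 \<le> (1 - 2 * \<alpha>) * m" using m0 a by (intro mult_nonneg_nonneg) auto
    have p3: "0 \<le> (2 - 3 * \<alpha>) * wr" using h(1) a by (intro mult_nonneg_nonneg) auto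
    have e1: "(3 * \<alpha> - 1) * wr = 3 * (\<alpha> * wr) - wr" "(3 * \<alpha> - 1) * m = 3 * (\<alpha> * m) - m"
      "(1 - 2 * \<alpha>) * m = m - 2 * (\<alpha> * m)" "(2 - 3 * \<alpha>) * wr = 2 * wr - 3 * (\<alpha> * wr)"
      "(2 - 3 * \<alpha>) * m = 2 * m - 3 * (\<alpha> * m)"
      by (simp_all add: algebra_simps)
    show "(2 - 3 * \<alpha>) * m + (3 * \<alpha> - 1) * wr \<le> Y" unfolding e1
      using h(7)[unfolded right_diff_distrib] by (elim disjE conjE) (use h(1-6) p1 p2 p3 in \<open>unfold e1; linarith\<close>)+
  qed
qed

end
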